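(* In the fixing phase described in the context, the expected regret accumulated by the whole system during the fixing phase is upper bounded by $$K^2M\exp\left(\frac{K-1}{M-1}\right).$$
   Context: There are $K$ users and $M\ge2$ channels, slotted synchronized time, no communication. A user on channel $m$ together with $n-1$ other users gets a reward in $[0,1]$ with mean $\mu(m,n)$ (the same for all users), so the regret incurred by a user in one slot is at most $1$. $f^\ast=(f^\ast(1),\dots,f^\ast(M))$ is a maximizer of $\sum_{i}f(i)\mu(i,f(i))$ over nonnegative integer vectors with $\sum_i f(i)=K$ (the optimal number of users per channel). Fixing phase (procedure Alloc): in every slot, each user that is not yet fixed picks a channel uniformly at random among the $M$ channels; if the number of users on the chosen channel $a$ in that slot is such that $\mu(a,f(a))\ge\mu(a,f^\ast(a))$ (i.e. at most $f^\ast(a)$ users are on it), the user becomes fixed on $a$ and chooses $a$ in all later slots of the phase. The fixing phase lasts until all users are fixed; regret is incurred during it. *)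

theory Defs
  imports "HOL-Probability.Probability"
begin

text \<open>Users are 0..<K, channels are 0..<M. A state of the fixing phase records,
for every user, the channel it is fixed on (Some a) or None if not yet fixed.\<close>

type_synonym fstate = "nat \<Rightarrow> nat option"

definition load :: "nat \<Rightarrow> (nat \<Rightarrow> nat) \<Rightarrow> nat \<Rightarrow> nat" where
  "load K c m = card {j \<in> {0..<K}. c j = m}"

text \<open>Regret of the whole system in one slot with configuration c:
 optimal expected total reward minus achieved expected total reward.\<close>
definition slot_regret ::
  "nat \<Rightarrow> nat \<Rightarrow> (nat \<Rightarrow> nat) \<Rightarrow> (nat \<Rightarrow> nat \<Rightarrow> real) \<Rightarrow> (nat \<Rightarrow> nat) \<Rightarrow> real" where
  "slot_regret K M fstar \<mu> c =
     (\<Sum>m<M. real (fstar m) * \<mu> m (fstar m))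
     - (\<Sum>m<M. real (load K c m) * \<mu> m (load K c m))"

definition choice_pmf :: "nat \<Rightarrow> nat \<Rightarrow> fstate \<Rightarrow> (nat \<Rightarrow> nat) pmf" where
  "choice_pmf K M s =
     map_pmf (\<lambda>r i. case s i of Some a \<Rightarrow> a | None \<Rightarrow> r i)
             (Pi_pmf {0..<K} 0 (\<lambda>_. pmf_of_set {0..<M}))"

definition next_state :: "nat \<Rightarrow> (nat \<Rightarrow> nat) \<Rightarrow> fstate \<Rightarrow> (nat \<Rightarrow> nat) \<Rightarrow> fstate" where
  "next_state K fstar s c = (\<lambda>i. case s i of Some a \<Rightarrow> Some a
      | None \<Rightarrow> (if i < K \<and> load K c (c i) \<le> fstar (c i) then Some (c i) else None))"

definition all_fixed :: "nat \<Rightarrow> fstate \<Rightarrow> bool" where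
  "all_fixed K s \<longleftrightarrow> (\<forall>i<K. s i \<noteq> None)"

primrec exp_regret ::
  "nat \<Rightarrow> nat \<Rightarrow> (nat \<Rightarrow> nat) \<Rightarrow> (nat \<Rightarrow> nat \<Rightarrow> real) \<Rightarrow> nat \<Rightarrow> fstate \<Rightarrow> real" where
  "exp_regret K M fstar \<mu> 0 s = 0"
| "exp_regret K M fstar \<mu> (Suc n) s =
     (if all_fixed K s then 0
      else measure_pmf.expectation (choice_pmf K M s)
             (\<lambda>c. slot_regret K M fstar \<mu> c
                  + exp_regret K M fstar \<mu> n (next_state K fstar s c)))"

end

theory Submission
  imports Defs
begin

lemma set_Pi_choice:
  fixes K M :: nat
  assumes "M > 0"
  shows "set_pmf (Pi_pmf {0..<K} (0::nat) (\<lambda>_. pmf_of_set {0..<M})) = PiE_dflt {0..<K} 0 (\<lambda>_. {0..<M})"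
  using assms by (subst set_Pi_pmf) (simp_all add: o_def)

lemma choice_finite:
  assumes "M > 0"
  shows "finite (set_pmf (choice_pmf K M s))"
  unfolding choice_pmf_def using assms
  by (simp add: set_Pi_choice finite_PiE_dflt)

lemma choice_mem:
  assumes "M > 0" "c \<in> set_pmf (choice_pmf K M s)" "i < K"
  shows "(s i = Some a \<longrightarrow> c i = a) \<and> (s i = None \<longrightarrow> c i < M)"
  using assms unfolding choice_pmf_def
  by (auto simp: set_Pi_choice PiE_dflt_def)

lemma slot_le:
  assumes "\<And>m n. m < M \<Longrightarrow> 0 \<le> \<mu> m n \<and> \<mu> m n \<le> 1"
    and "(\<Sum>m<M. fstar m) = K"
  shows "slot_regret K M fstar \<mu> c \<le> real K"
proof -
  have "(\<Sum>m<M. real (fstar m) * \<mu> m (fstar m)) \<le> (\<Sum>m<M. real (fstar m))"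
    by (intro sum_mono) (use assms(1) in \<open>auto intro: mult_left_le\<close>)
  also have "\<dots> = real K" using assms(2) by (metis of_nat_sum)
  finally have 1: "(\<Sum>m<M. real (fstar m) * \<mu> m (fstar m)) \<le> real K" .
  have "0 \<le> (\<Sum>m<M. real (load K c m) * \<mu> m (load K c m))"
    by (intro sum_nonneg) (use assms(1) in auto)
  with 1 show ?thesis unfolding slot_regret_def by linarith
qed


definition finv :: "nat \<Rightarrow> (nat \<Rightarrow> nat) \<Rightarrow> fstate \<Rightarrow> bool" where
  "finv K fstar s \<longleftrightarrow> (\<forall>a. card {i\<in>{0..<K}. s i = Some a} \<le> fstar a)"

definition unf :: "nat \<Rightarrow> fstate \<Rightarrow> nat" where
  "unf K s = card {i\<in>{0..<K}. s i = None}"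

lemma finv_next:
  assumes "M > 0" "finv K fstar s" "c \<in> set_pmf (choice_pmf K M s)"
  shows "finv K fstar (next_state K fstar s c)"
  unfolding finv_def
proof
  fix a
  let ?G = "{i\<in>{0..<K}. s i = Some a}"
  let ?N = "{i\<in>{0..<K}. next_state K fstar s c i = Some a}"
  show "card ?N \<le> fstar a"
  proof (cases "load K c a \<le> fstar a")
    case True
    have "?N \<subseteq> {j\<in>{0..<K}. c j = a}"
      using choice_mem[OF assms(1,3)]
      by (auto simp: next_state_def split: option.splits if_splits)
    hence "card ?N \<le> load K c a" unfolding load_def by (intro card_mono) auto
    with True show ?thesis by linarith
  next
    case False
    have "?N \<subseteq> ?G"
      using False by (auto simp: next_state_def split: option.splits if_splits)
    hence "card ?N \<le> card ?G" by (intro card_mono) auto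
    with assms(2) show ?thesis unfolding finv_def by (meson order_trans)
  qed
qed

lemma unf_next_le: "unf K (next_state K fstar s c) \<le> unf K s"
  unfolding unf_def
  by (intro card_mono) (auto simp: next_state_def split: option.splits if_splits)

lemma unf_next_lt:
  assumes "M > 0" "c \<in> set_pmf (choice_pmf K M s)" "i0 < K" "s i0 = None" "c i0 = a"
    and "\<forall>j<K. j \<noteq> i0 \<longrightarrow> s j = None \<longrightarrow> c j \<noteq> a"
    and "card {i\<in>{0..<K}. s i = Some a} < fstar a"
  shows "unf K (next_state K fstar s c) < unf K s"
proof -
  have "{j\<in>{0..<K}. c j = a} \<subseteq> insert i0 {i\<in>{0..<K}. s i = Some a}"
  proof
    fix j assume j: "j \<in> {j\<in>{0..<K}. c j = a}"
    show "j \<in> insert i0 {i\<in>{0..<K}. s i = Some a}"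
    proof (cases "s j")
      case None thus ?thesis using j assms(6) by auto
    next
      case (Some b) thus ?thesis using j choice_mem[OF assms(1,2), of j b] by auto
    qed
  qed
  hence "load K c a \<le> card (insert i0 {i\<in>{0..<K}. s i = Some a})"
    unfolding load_def by (intro card_mono) auto
  also have "\<dots> \<le> Suc (card {i\<in>{0..<K}. s i = Some a})" by (simp add: card_insert_le_m1)
  finally have L: "load K c (c i0) \<le> fstar (c i0)" using assms(5,7) by simp
  have "{i\<in>{0..<K}. next_state K fstar s c i = None} \<subseteq> {i\<in>{0..<K}. s i = None} - {i0}"
    using L assms(3,4) by (auto simp: next_state_def split: option.splits if_splits)
  hence "unf K (next_state K fstar s c) \<le> card ({i\<in>{0..<K}. s i = None} - {i0})"
    unfolding unf_def by (intro card_mono) auto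
  also have "\<dots> < unf K s" unfolding unf_def
    using assms(3,4) by (intro psubset_card_mono) auto
  finally show ?thesis .
qed


lemma probA:
  fixes K M :: nat
  assumes "M > 0" "i0 < K" "s i0 = None" "a < M"
  shows "measure_pmf.prob (choice_pmf K M s)
           {c. c i0 = a \<and> (\<forall>j<K. j \<noteq> i0 \<longrightarrow> s j = None \<longrightarrow> c j \<noteq> a)}
         \<ge> (1 / real M) * ((real M - 1) / real M) ^ (K - 1)"
proof -
  define g where "g = (\<lambda>(r::nat\<Rightarrow>nat) i. case s i of Some b \<Rightarrow> b | None \<Rightarrow> r i)"
  define B where "B = (\<lambda>j::nat. if j = i0 then {a} else UNIV - {a})"
  define A where "A = {c. c i0 = a \<and> (\<forall>j<K. j \<noteq> i0 \<longrightarrow> s j = None \<longrightarrow> c j \<noteq> a)}"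
  let ?P = "Pi_pmf {0..<K} (0::nat) (\<lambda>_. pmf_of_set {0..<M})"
  have sub: "Pi {0..<K} B \<subseteq> g -` A"
    using assms(2,3) by (auto simp: B_def A_def g_def Pi_def)
  have mB: "measure_pmf.prob (pmf_of_set {0..<M}) (B j) =
      (if j = i0 then 1 / real M else (real M - 1) / real M)" for j
  proof -
    have "{0..<M} \<inter> (UNIV - {a}) = {0..<M} - {a}" by auto
    hence "card ({0..<M} \<inter> (UNIV - {a})) = M - 1"
      using assms(4) by (simp add: card_Diff_singleton)
    thus ?thesis using assms(1,4)
      by (simp add: B_def measure_pmf_of_set Int_absorb1 of_nat_diff)
  qed
  have "measure_pmf.prob ?P (Pi {0..<K} B) = (\<Prod>j\<in>{0..<K}. measure_pmf.prob (pmf_of_set {0..<M}) (B j))"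
    by (rule measure_Pi_pmf_Pi) simp
  also have "\<dots> = (1 / real M) * (\<Prod>j\<in>{0..<K} - {i0}. (real M - 1) / real M)"
    using assms(2) by (simp add: mB prod.remove)
  also have "\<dots> = (1 / real M) * ((real M - 1) / real M) ^ (K - 1)"
    using assms(2) by simp
  finally have eq: "measure_pmf.prob ?P (Pi {0..<K} B) = (1 / real M) * ((real M - 1) / real M) ^ (K - 1)" .
  have "measure_pmf.prob ?P (Pi {0..<K} B) \<le> measure_pmf.prob ?P (g -` A)"
    using sub by (intro measure_pmf.finite_measure_mono) auto
  also have "\<dots> = measure_pmf.prob (choice_pmf K M s) A"
    unfolding choice_pmf_def g_def by simp
  finally show ?thesis using eq unfolding A_def by simp
qed


lemma exists_free_channel:
  fixes K M :: nat
  assumes "finv K fstar s" "(\<Sum>m<M. fstar m) = K" "i0 < K" "s i0 = None"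
  shows "\<exists>a<M. card {i\<in>{0..<K}. s i = Some a} < fstar a"
proof (rule ccontr)
  assume "\<not> ?thesis"
  hence ge: "\<forall>a<M. fstar a \<le> card {i\<in>{0..<K}. s i = Some a}" by auto
  have "K = (\<Sum>a<M. fstar a)" using assms(2) by simp
  also have "\<dots> \<le> (\<Sum>a<M. card {i\<in>{0..<K}. s i = Some a})"
    using ge by (intro sum_mono) auto
  also have "\<dots> = card (\<Union>a\<in>{..<M}. {i\<in>{0..<K}. s i = Some a})"
    by (rule card_UN_disjoint[symmetric]) auto
  also have "\<dots> \<le> card ({0..<K} - {i0})"
    using assms(4) by (intro card_mono) auto
  also have "\<dots> < K" using assms(3) by simp
  finally show False by simp
qed

lemma main_bound:
  fixes K M :: nat and fstar :: "nat \<Rightarrow> nat" and \<mu> :: "nat \<Rightarrow> nat \<Rightarrow> real"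
  assumes M2: "M \<ge> 2"
    and mu_range: "\<And>m n. m < M \<Longrightarrow> 0 \<le> \<mu> m n \<and> \<mu> m n \<le> 1"
    and fstar_sum: "(\<Sum>m<M. fstar m) = K"
  defines "p \<equiv> (1 / real M) * ((real M - 1) / real M) ^ (K - 1)"
  shows "\<forall>s. finv K fstar s \<longrightarrow> exp_regret K M fstar \<mu> n s \<le> (real K / p) * real (unf K s)"
proof (induction n)
  case 0
  have "p > 0" using M2 unfolding p_def by simp
  thus ?case by simp
next
  case (Suc n)
  have M0: "M > 0" using M2 by simp
  have pp: "p > 0" using M2 unfolding p_def by simp
  define C where "C = real K / p"
  have C0: "C \<ge> 0" using pp unfolding C_def by simp
  have Cp: "C * p = real K" using pp unfolding C_def by simp
  show ?case
  proof (intro allI impI)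
    fix s assume inv: "finv K fstar s"
    show "exp_regret K M fstar \<mu> (Suc n) s \<le> (real K / p) * real (unf K s)"
    proof (cases "all_fixed K s")
      case True thus ?thesis using pp by simp
    next
      case False
      then obtain i0 where i0: "i0 < K" "s i0 = None" unfolding all_fixed_def by auto
      obtain a where a: "a < M" "card {i\<in>{0..<K}. s i = Some a} < fstar a"
        using exists_free_channel[OF inv fstar_sum i0] by auto
      define A where "A = {c. c i0 = a \<and> (\<forall>j<K. j \<noteq> i0 \<longrightarrow> s j = None \<longrightarrow> c j \<noteq> a)}"
      let ?Q = "choice_pmf K M s"
      have fin: "finite (set_pmf ?Q)" by (rule choice_finite[OF M0])
      have pA: "measure_pmf.prob ?Q A \<ge> p"
        unfolding A_def p_def using probA[of M i0 K s a] M0 i0 a(1) by simp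
      have pt: "slot_regret K M fstar \<mu> c + exp_regret K M fstar \<mu> n (next_state K fstar s c)
                \<le> (real K + C * real (unf K s)) - C * indicator A c"
        if c: "c \<in> set_pmf ?Q" for c
      proof -
        have 1: "slot_regret K M fstar \<mu> c \<le> real K" by (rule slot_le[OF mu_range fstar_sum])
        have 2: "exp_regret K M fstar \<mu> n (next_state K fstar s c) \<le> C * real (unf K (next_state K fstar s c))"
          using Suc.IH finv_next[OF M0 inv c] unfolding C_def by blast
        have 3: "real (unf K (next_state K fstar s c)) \<le> real (unf K s) - indicator A c"
        proof (cases "c \<in> A")
          case True
          hence "unf K (next_state K fstar s c) < unf K s"
            using unf_next_lt[OF M0 c i0, of a] a(2) unfolding A_def by auto
          thus ?thesis using True by simp
        next
          case False thus ?thesis using unf_next_le[of K fstar s c] by simp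
        qed
        have "C * real (unf K (next_state K fstar s c)) \<le> C * (real (unf K s) - indicator A c)"
          using 3 C0 by (rule mult_left_mono)
        thus ?thesis using 1 2 by (simp add: algebra_simps)
      qed
      have "exp_regret K M fstar \<mu> (Suc n) s = measure_pmf.expectation ?Q
              (\<lambda>c. slot_regret K M fstar \<mu> c + exp_regret K M fstar \<mu> n (next_state K fstar s c))"
        using False by simp
      also have "\<dots> \<le> measure_pmf.expectation ?Q (\<lambda>c. (real K + C * real (unf K s)) - C * indicator A c)"
        by (intro integral_mono_AE integrable_measure_pmf_finite[OF fin] AE_pmfI pt)
      also have "\<dots> = (real K + C * real (unf K s)) - C * measure_pmf.prob ?Q A"
      proof -
        have "measure_pmf.expectation ?Q (\<lambda>c. (real K + C * real (unf K s)) - C * indicator A c)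
            = measure_pmf.expectation ?Q (\<lambda>c. real K + C * real (unf K s)) - measure_pmf.expectation ?Q (\<lambda>c. C * indicator A c)"
          by (rule Bochner_Integration.integral_diff; rule integrable_measure_pmf_finite[OF fin])
        thus ?thesis by simp
      qed
      also have "\<dots> \<le> (real K + C * real (unf K s)) - C * p"
        using pA C0 by (simp add: mult_left_mono)
      also have "\<dots> = (real K / p) * real (unf K s)" using Cp unfolding C_def by simp
      finally show ?thesis .
    qed
  qed
qed


theorem lemma3:
  fixes K M :: nat and fstar :: "nat \<Rightarrow> nat" and \<mu> :: "nat \<Rightarrow> nat \<Rightarrow> real"
  assumes M2: "M \<ge> 2"
    and mu_range: "\<And>m n. m < M \<Longrightarrow> 0 \<le> \<mu> m n \<and> \<mu> m n \<le> 1"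
    and fstar_sum: "(\<Sum>m<M. fstar m) = K"
    and fstar_opt: "\<And>f :: nat \<Rightarrow> nat. (\<Sum>m<M. f m) = K \<Longrightarrow>
          (\<Sum>m<M. real (f m) * \<mu> m (f m)) \<le> (\<Sum>m<M. real (fstar m) * \<mu> m (fstar m))"
  shows "\<forall>n. exp_regret K M fstar \<mu> n (\<lambda>_. None)
            \<le> real K ^ 2 * real M * exp ((real K - 1) / (real M - 1))"
proof
  fix n
  define p where "p = (1 / real M) * ((real M - 1) / real M) ^ (K - 1)"
  have pp: "p > 0" using M2 unfolding p_def by simp
  have inv0: "finv K fstar (\<lambda>_. None)" unfolding finv_def by simp
  have u0: "unf K (\<lambda>_. None) = K" unfolding unf_def by simp
  have "exp_regret K M fstar \<mu> n (\<lambda>_. None) \<le> (real K / p) * real K"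
  proof -
    have "\<forall>s. finv K fstar s \<longrightarrow> exp_regret K M fstar \<mu> n s \<le> (real K / p) * real (unf K s)"
      unfolding p_def by (rule main_bound[OF M2 mu_range fstar_sum])
    hence "exp_regret K M fstar \<mu> n (\<lambda>_. None) \<le> (real K / p) * real (unf K (\<lambda>_. None))"
      using inv0 by blast
    thus ?thesis using u0 by simp
  qed
  also have "\<dots> \<le> real K ^ 2 * real M * exp ((real K - 1) / (real M - 1))"
  proof (cases "K = 0")
    case True thus ?thesis by simp
  next
    case False
    have M1: "real M - 1 > 0" using M2 by simp
    have q: "real M / (real M - 1) \<le> exp (1 / (real M - 1))"
    proof -
      have "real M / (real M - 1) = 1 + 1 / (real M - 1)" using M1 by (simp add: field_simps)
      also have "\<dots> \<le> exp (1 / (real M - 1))" by (rule exp_ge_add_one_self)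
      finally show ?thesis .
    qed
    have "1 / p = real M * (real M / (real M - 1)) ^ (K - 1)"
      using M1 M2 unfolding p_def by (simp add: field_simps power_divide)
    also have "\<dots> \<le> real M * exp (1 / (real M - 1)) ^ (K - 1)"
      using q M1 by (intro mult_left_mono power_mono) auto
    also have "exp (1 / (real M - 1)) ^ (K - 1) = exp (real (K - 1) * (1 / (real M - 1)))"
      by (rule exp_of_nat_mult[symmetric])
    also have "real (K - 1) * (1 / (real M - 1)) = (real K - 1) / (real M - 1)"
      using False by (simp add: of_nat_diff)
    finally have ip: "1 / p \<le> real M * exp ((real K - 1) / (real M - 1))" .
    have "(real K / p) * real K = real K ^ 2 * (1 / p)" by (simp add: power2_eq_square)
    also have "\<dots> \<le> real K ^ 2 * (real M * exp ((real K - 1) / (real M - 1)))"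
      using ip by (intro mult_left_mono) auto
    finally show ?thesis by (simp add: mult.assoc)
  qed
  finally show "exp_regret K M fstar \<mu> n (\<lambda>_. None)
            \<le> real K ^ 2 * real M * exp ((real K - 1) / (real M - 1))" .
qed

end
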